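(* Let $T$ be a first-order theory over $\Sigma$ and $\varphi$ a sentence over $\Sigma$ such that $T\models\varphi$. Then $\mathrm{Opt}_\varphi$ is a monotone propagator for $T$.
   Context: Vocabularies are finite sets of predicate symbols. Truth values $\mathbf{t},\mathbf{f},\mathbf{u},\mathbf{i}$ with precision order $\mathbf{u} \le_p \mathbf{t} \le_p \mathbf{i}$, $\mathbf{u} \le_p \mathbf{f} \le_p \mathbf{i}$ ($\mathbf{t},\mathbf{f}$ incomparable). A four-valued $\Sigma$-structure $\tilde I$ has domain $D$ and assigns to each $P/n\in\Sigma$ a function $P^{\tilde I}:D^n\to\{\mathbf{t},\mathbf{f},\mathbf{u},\mathbf{i}\}$; two-valued structures are identified with ordinary structures. On structures with a fixed domain, $\le_p$ is pointwise; $\mathrm{glb}_{\le_p}$ is the greatest lower bound (glb of the empty set: all $\mathbf{i}$). For a sentence $\varphi$, $\mathrm{Opt}_\varphi(\tilde I)=\mathrm{glb}_{\le_p}\{M\mid M\text{ two-valued},\tilde I\le_p M, M\models\varphi\}$. A propagator for $T$ is a map $O$ on four-valued $\Sigma$-structures with (i) $\tilde I\le_p O(\tilde I)$ and (ii) $O(\tilde I)\le_p M$ for every two-valued model $M$ of $T$ with $\tilde I\le_p M$; it is monotone if $\tilde I\le_p\tilde J$ implies $O(\tilde I)\le_p O(\tilde J)$. *)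

theory Defs
  imports Main
begin

datatype tv = TT | FF | UU | II

fun le_tv :: "tv \<Rightarrow> tv \<Rightarrow> bool" where
  "le_tv UU _ = True"
| "le_tv _ II = True"
| "le_tv TT TT = True"
| "le_tv FF FF = True"
| "le_tv _ _ = False"

text \<open>Greatest lower bound w.r.t. the precision order (glb of the empty set is II).\<close>
definition glb_tv :: "tv set \<Rightarrow> tv" where
  "glb_tv S = (THE g. (\<forall>x\<in>S. le_tv g x) \<and> (\<forall>g'. (\<forall>x\<in>S. le_tv g' x) \<longrightarrow> le_tv g' g))"

text \<open>A vocabulary is a finite set of predicate symbols of type 'p, with arities given by ar.
  Variables are natural numbers.\<close>

datatype 'p fm =
    Atom 'p "nat list"
  | Eq nat nat
  | Neg "'p fm"
  | Conj "'p fm" "'p fm"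
  | Disj "'p fm" "'p fm"
  | Ex nat "'p fm"
  | All nat "'p fm"

fun free_vars :: "'p fm \<Rightarrow> nat set" where
  "free_vars (Atom P xs) = set xs"
| "free_vars (Eq x y) = {x, y}"
| "free_vars (Neg \<phi>) = free_vars \<phi>"
| "free_vars (Conj \<phi> \<psi>) = free_vars \<phi> \<union> free_vars \<psi>"
| "free_vars (Disj \<phi> \<psi>) = free_vars \<phi> \<union> free_vars \<psi>"
| "free_vars (Ex x \<phi>) = free_vars \<phi> - {x}"
| "free_vars (All x \<phi>) = free_vars \<phi> - {x}"

fun wf_fm :: "'p set \<Rightarrow> ('p \<Rightarrow> nat) \<Rightarrow> 'p fm \<Rightarrow> bool" where
  "wf_fm \<Sigma> ar (Atom P xs) = (P \<in> \<Sigma> \<and> length xs = ar P)"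
| "wf_fm \<Sigma> ar (Eq x y) = True"
| "wf_fm \<Sigma> ar (Neg \<phi>) = wf_fm \<Sigma> ar \<phi>"
| "wf_fm \<Sigma> ar (Conj \<phi> \<psi>) = (wf_fm \<Sigma> ar \<phi> \<and> wf_fm \<Sigma> ar \<psi>)"
| "wf_fm \<Sigma> ar (Disj \<phi> \<psi>) = (wf_fm \<Sigma> ar \<phi> \<and> wf_fm \<Sigma> ar \<psi>)"
| "wf_fm \<Sigma> ar (Ex x \<phi>) = wf_fm \<Sigma> ar \<phi>"
| "wf_fm \<Sigma> ar (All x \<phi>) = wf_fm \<Sigma> ar \<phi>"

definition sentence :: "'p set \<Rightarrow> ('p \<Rightarrow> nat) \<Rightarrow> 'p fm \<Rightarrow> bool" where
  "sentence \<Sigma> ar \<phi> \<longleftrightarrow> wf_fm \<Sigma> ar \<phi> \<and> free_vars \<phi> = {}"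

text \<open>A four-valued structure with domain D interprets P by a map on tuples (lists of length
  ar P over D); values outside this region are irrelevant.\<close>
type_synonym ('p, 'd) str4 = "'p \<Rightarrow> 'd list \<Rightarrow> tv"

definition tuples :: "'d set \<Rightarrow> nat \<Rightarrow> 'd list set" where
  "tuples D n = {ds. length ds = n \<and> set ds \<subseteq> D}"

definition le_p :: "'p set \<Rightarrow> ('p \<Rightarrow> nat) \<Rightarrow> 'd set \<Rightarrow> ('p, 'd) str4 \<Rightarrow> ('p, 'd) str4 \<Rightarrow> bool" where
  "le_p \<Sigma> ar D I J \<longleftrightarrow> (\<forall>P\<in>\<Sigma>. \<forall>ds\<in>tuples D (ar P). le_tv (I P ds) (J P ds))"

definition two_valued :: "'p set \<Rightarrow> ('p \<Rightarrow> nat) \<Rightarrow> 'd set \<Rightarrow> ('p, 'd) str4 \<Rightarrow> bool" where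
  "two_valued \<Sigma> ar D M \<longleftrightarrow> (\<forall>P\<in>\<Sigma>. \<forall>ds\<in>tuples D (ar P). M P ds \<in> {TT, FF})"

fun sat :: "'d set \<Rightarrow> ('p, 'd) str4 \<Rightarrow> (nat \<Rightarrow> 'd) \<Rightarrow> 'p fm \<Rightarrow> bool" where
  "sat D M e (Atom P xs) = (M P (map e xs) = TT)"
| "sat D M e (Eq x y) = (e x = e y)"
| "sat D M e (Neg \<phi>) = (\<not> sat D M e \<phi>)"
| "sat D M e (Conj \<phi> \<psi>) = (sat D M e \<phi> \<and> sat D M e \<psi>)"
| "sat D M e (Disj \<phi> \<psi>) = (sat D M e \<phi> \<or> sat D M e \<psi>)"
| "sat D M e (Ex x \<phi>) = (\<exists>d\<in>D. sat D M (e(x := d)) \<phi>)"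
| "sat D M e (All x \<phi>) = (\<forall>d\<in>D. sat D M (e(x := d)) \<phi>)"

definition models :: "'d set \<Rightarrow> ('p, 'd) str4 \<Rightarrow> 'p fm \<Rightarrow> bool" where
  "models D M \<phi> \<longleftrightarrow> (\<forall>e. (\<forall>x. e x \<in> D) \<longrightarrow> sat D M e \<phi>)"

definition models_theory :: "'d set \<Rightarrow> ('p, 'd) str4 \<Rightarrow> 'p fm set \<Rightarrow> bool" where
  "models_theory D M T \<longleftrightarrow> (\<forall>\<psi>\<in>T. models D M \<psi>)"

definition entails :: "'p set \<Rightarrow> ('p \<Rightarrow> nat) \<Rightarrow> 'p fm set \<Rightarrow> 'p fm \<Rightarrow> 'd itself \<Rightarrow> bool" where
  "entails \<Sigma> ar T \<phi> _ \<longleftrightarrow>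
     (\<forall>(D::'d set) M. D \<noteq> {} \<longrightarrow> two_valued \<Sigma> ar D M \<longrightarrow> models_theory D M T \<longrightarrow> models D M \<phi>)"

definition Opt :: "'p set \<Rightarrow> ('p \<Rightarrow> nat) \<Rightarrow> 'd set \<Rightarrow> 'p fm \<Rightarrow> ('p, 'd) str4 \<Rightarrow> ('p, 'd) str4" where
  "Opt \<Sigma> ar D \<phi> I = (\<lambda>P ds. glb_tv {M P ds | M. two_valued \<Sigma> ar D M \<and> le_p \<Sigma> ar D I M \<and> models D M \<phi>})"

definition propagator :: "'p set \<Rightarrow> ('p \<Rightarrow> nat) \<Rightarrow> 'd set \<Rightarrow> 'p fm set \<Rightarrow> (('p, 'd) str4 \<Rightarrow> ('p, 'd) str4) \<Rightarrow> bool" where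
  "propagator \<Sigma> ar D T Op \<longleftrightarrow>
     (\<forall>I. le_p \<Sigma> ar D I (Op I) \<and>
          (\<forall>M. two_valued \<Sigma> ar D M \<longrightarrow> models_theory D M T \<longrightarrow> le_p \<Sigma> ar D I M \<longrightarrow> le_p \<Sigma> ar D (Op I) M))"

definition monotone_op :: "'p set \<Rightarrow> ('p \<Rightarrow> nat) \<Rightarrow> 'd set \<Rightarrow> (('p, 'd) str4 \<Rightarrow> ('p, 'd) str4) \<Rightarrow> bool" where
  "monotone_op \<Sigma> ar D Op \<longleftrightarrow> (\<forall>I J. le_p \<Sigma> ar D I J \<longrightarrow> le_p \<Sigma> ar D (Op I) (Op J))"

end

theory Submission
  imports Defs
begin

lemma le_tv_trans: "le_tv a b \<Longrightarrow> le_tv b c \<Longrightarrow> le_tv a c"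
  by (cases a; cases b; cases c; simp)

lemma le_tv_antisym: "le_tv a b \<Longrightarrow> le_tv b a \<Longrightarrow> a = b"
  by (cases a; cases b; simp)

lemma glb_ex: "\<exists>g. (\<forall>x\<in>S. le_tv g x) \<and> (\<forall>g'. (\<forall>x\<in>S. le_tv g' x) \<longrightarrow> le_tv g' g)"
proof -
  define g where "g = (if S \<subseteq> {II} then II else if S \<subseteq> {TT,II} then TT
     else if S \<subseteq> {FF,II} then FF else UU)"
  have lb: "\<forall>x\<in>S. le_tv g x"
  proof
    fix x assume "x \<in> S" thus "le_tv g x"
      unfolding g_def by (cases x; auto)
  qed
  have gr: "\<forall>g'. (\<forall>x\<in>S. le_tv g' x) \<longrightarrow> le_tv g' g"
  proof (intro allI impI)
    fix g' assume h: "\<forall>x\<in>S. le_tv g' x"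
    show "le_tv g' g"
    proof (cases "S \<subseteq> {II}")
      case True thus ?thesis unfolding g_def by (cases g'; simp)
    next
      case F1: False
      then obtain y where y: "y \<in> S" "y \<noteq> II" by blast
      show ?thesis
      proof (cases "S \<subseteq> {TT,II}")
        case True
        with y have "TT \<in> S" by auto
        with h have "le_tv g' TT" by blast
        thus ?thesis using F1 True unfolding g_def by simp
      next
        case F2: False
        then obtain z where z: "z \<in> S" "z \<noteq> II" "z \<noteq> TT" by blast
        show ?thesis
        proof (cases "S \<subseteq> {FF,II}")
          case True
          with y have "FF \<in> S" by auto
          with h have "le_tv g' FF" by blast
          thus ?thesis using F1 F2 True unfolding g_def by simp
        next
          case F3: False
          then obtain w where w: "w \<in> S" "w \<noteq> II" "w \<noteq> FF" by blast
          have "le_tv g' z" "le_tv g' w" using h z w by auto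
          hence "g' = UU" using z w by (cases g'; cases z; cases w; simp)
          thus ?thesis by simp
        qed
      qed
    qed
  qed
  show ?thesis using lb gr by blast
qed

lemma glb_prop: "(\<forall>x\<in>S. le_tv (glb_tv S) x) \<and> (\<forall>g'. (\<forall>x\<in>S. le_tv g' x) \<longrightarrow> le_tv g' (glb_tv S))"
proof -
  obtain g where g: "(\<forall>x\<in>S. le_tv g x) \<and> (\<forall>g'. (\<forall>x\<in>S. le_tv g' x) \<longrightarrow> le_tv g' g)"
    using glb_ex by blast
  have "glb_tv S = g" unfolding glb_tv_def
    by (rule the_equality) (use g le_tv_antisym in blast)+
  thus ?thesis using g by simp
qed

lemma glb_lower: "x \<in> S \<Longrightarrow> le_tv (glb_tv S) x"
  using glb_prop by blast

lemma glb_greatest: "(\<And>x. x \<in> S \<Longrightarrow> le_tv g x) \<Longrightarrow> le_tv g (glb_tv S)"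
  using glb_prop by blast

theorem proposition3p9:
  fixes \<Sigma> :: "'p set" and ar :: "'p \<Rightarrow> nat" and T :: "'p fm set" and \<phi> :: "'p fm"
    and D :: "'d set"
  assumes "finite \<Sigma>"
    and "\<forall>\<psi>\<in>T. sentence \<Sigma> ar \<psi>"
    and "sentence \<Sigma> ar \<phi>"
    and "entails \<Sigma> ar T \<phi> TYPE('d)"
    and "D \<noteq> {}"
  shows "propagator \<Sigma> ar D T (Opt \<Sigma> ar D \<phi>) \<and> monotone_op \<Sigma> ar D (Opt \<Sigma> ar D \<phi>)"
proof
  show "propagator \<Sigma> ar D T (Opt \<Sigma> ar D \<phi>)"
    unfolding propagator_def
  proof (intro allI conjI impI)
    fix I
    show "le_p \<Sigma> ar D I (Opt \<Sigma> ar D \<phi> I)"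
      unfolding le_p_def Opt_def
      by (auto intro!: glb_greatest simp: le_p_def)
    fix M :: "('p,'d) str4"
    assume tv: "two_valued \<Sigma> ar D M" and mt: "models_theory D M T" and le: "le_p \<Sigma> ar D I M"
    have "models D M \<phi>" using assms(4) assms(5) tv mt unfolding entails_def by blast
    show "le_p \<Sigma> ar D (Opt \<Sigma> ar D \<phi> I) M"
      unfolding le_p_def
    proof (intro ballI)
      fix P ds
      assume "P \<in> \<Sigma>" "ds \<in> tuples D (ar P)"
      have "M P ds \<in> {Ma P ds |Ma. two_valued \<Sigma> ar D Ma \<and> le_p \<Sigma> ar D I Ma \<and> models D Ma \<phi>}"
        using tv le \<open>models D M \<phi>\<close> by blast
      thus "le_tv (Opt \<Sigma> ar D \<phi> I P ds) (M P ds)"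
        unfolding Opt_def by (rule glb_lower)
    qed
  qed
next
  show "monotone_op \<Sigma> ar D (Opt \<Sigma> ar D \<phi>)"
    unfolding monotone_op_def
  proof (intro allI impI)
    fix I J assume IJ: "le_p \<Sigma> ar D I J"
    show "le_p \<Sigma> ar D (Opt \<Sigma> ar D \<phi> I) (Opt \<Sigma> ar D \<phi> J)"
      unfolding le_p_def
    proof (intro ballI)
      fix P ds assume P: "P \<in> \<Sigma>" and ds: "ds \<in> tuples D (ar P)"
      show "le_tv (Opt \<Sigma> ar D \<phi> I P ds) (Opt \<Sigma> ar D \<phi> J P ds)"
        unfolding Opt_def
      proof (rule glb_greatest)
      fix x assume x: "x \<in> {M P ds |M. two_valued \<Sigma> ar D M \<and> le_p \<Sigma> ar D J M \<and> models D M \<phi>}"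
      then obtain M where M: "x = M P ds" "two_valued \<Sigma> ar D M" "le_p \<Sigma> ar D J M" "models D M \<phi>"
        by blast
      have "le_p \<Sigma> ar D I M" using IJ M(3) unfolding le_p_def by (blast intro: le_tv_trans)
      thus "le_tv (glb_tv {M P ds |M. two_valued \<Sigma> ar D M \<and> le_p \<Sigma> ar D I M \<and> models D M \<phi>}) x"
        using M by (auto intro!: glb_lower)
    qed
    qed
  qed
qed

end
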